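(* Let $M$ be a binary matroid with set of bases $\mathcal{B}$, and let $\mathcal{B}_1\subseteq\mathcal{B}$ be the set of bases of some matroid $M_1$ (on the same ground set). If there is $X\in\mathcal{B}_1$ such that every vertex adjacent to $X$ in $G(M)$ lies in $\mathcal{B}_1$, then $\mathcal{B}_1=\mathcal{B}$.
   Context: A matroid is binary if it is representable over $\mathbb{F}_2$. The base graph $G(M)$ has the bases of $M$ as vertices, two bases being adjacent iff their symmetric difference has exactly two elements. *)

theory Defs
  imports Main "HOL.Modules" "HOL-Library.Z2" "HOL-Library.Function_Algebras"
begin

definition matroid_bases :: "'a set \<Rightarrow> 'a set set \<Rightarrow> bool" where
  "matroid_bases E \<B> \<longleftrightarrow> finite E \<and> \<B> \<noteq> {} \<and> (\<forall>B\<in>\<B>. B \<subseteq> E) \<and>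
     (\<forall>B1\<in>\<B>. \<forall>B2\<in>\<B>. \<forall>x\<in>B1 - B2. \<exists>y\<in>B2 - B1. insert y (B1 - {x}) \<in> \<B>)"

definition indep_of :: "'a set set \<Rightarrow> 'a set \<Rightarrow> bool" where
  "indep_of \<B> X \<longleftrightarrow> (\<exists>B\<in>\<B>. X \<subseteq> B)"

definition scale2 :: "bit \<Rightarrow> (nat \<Rightarrow> bit) \<Rightarrow> (nat \<Rightarrow> bit)" where
  "scale2 c v = (\<lambda>i. c * v i)"

text \<open>Binary = representable over GF(2): an element labelling by vectors such that
  a subset of E is independent iff its vectors are distinct and linearly independent.\<close>
definition binary_matroid :: "'a set \<Rightarrow> 'a set set \<Rightarrow> bool" where
  "binary_matroid E \<B> \<longleftrightarrow> matroid_bases E \<B> \<and>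
     (\<exists>f :: 'a \<Rightarrow> (nat \<Rightarrow> bit). \<forall>X. X \<subseteq> E \<longrightarrow>
        (indep_of \<B> X \<longleftrightarrow> inj_on f X \<and> \<not> module.dependent scale2 (f ` X)))"

definition base_adj :: "'a set set \<Rightarrow> 'a set \<Rightarrow> 'a set \<Rightarrow> bool" where
  "base_adj \<B> X Y \<longleftrightarrow> X \<in> \<B> \<and> Y \<in> \<B> \<and> card ((X - Y) \<union> (Y - X)) = 2"

end

theory Submission imports Defs "HOL.Vector_Spaces" begin
interpretation v2: vector_space scale2
  by unfold_locales (simp_all add: scale2_def fun_eq_iff distrib_left distrib_right del: add_bit_eq_xor mult_bit_eq_and)

lemma bit_vec_sum: "((w1::nat\<Rightarrow>bit) - s) + (w2 - s) = w1 + w2"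
  by (simp add: fun_eq_iff)

lemma mb_finite: "matroid_bases E \<B> \<Longrightarrow> B \<in> \<B> \<Longrightarrow> finite B"
  unfolding matroid_bases_def by (meson finite_subset)

lemma mb_sub: "matroid_bases E \<B> \<Longrightarrow> B \<in> \<B> \<Longrightarrow> B \<subseteq> E"
  unfolding matroid_bases_def by blast

lemma mb_exch: "matroid_bases E \<B> \<Longrightarrow> B1 \<in> \<B> \<Longrightarrow> B2 \<in> \<B> \<Longrightarrow> x \<in> B1 - B2
  \<Longrightarrow> \<exists>y\<in>B2 - B1. insert y (B1 - {x}) \<in> \<B>"
  unfolding matroid_bases_def by blast

lemma mb_no_strict:
  assumes "matroid_bases E \<B>" "B1 \<in> \<B>" "B2 \<in> \<B>" "B1 \<subseteq> B2" shows "B1 = B2"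
proof (rule ccontr)
  assume "B1 \<noteq> B2" then obtain x where "x \<in> B2 - B1" using assms(4) by blast
  then obtain y where "y \<in> B1 - B2" using mb_exch[OF assms(1,3,2)] by blast
  thus False using assms(4) by blast
qed

lemma mb_card_diff:
  assumes mb: "matroid_bases E \<B>"
  shows "B1 \<in> \<B> \<Longrightarrow> B2 \<in> \<B> \<Longrightarrow> card (B1 - B2) = card (B2 - B1)"
proof (induction "card (B1 - B2)" arbitrary: B1)
  case 0
  have "finite B1" using mb_finite[OF mb 0(2)] .
  then have "B1 \<subseteq> B2" using 0 by auto
  then have "B1 = B2" using mb_no_strict[OF mb] 0 by blast
  then show ?case by simp
next
  case (Suc n)
  have fin1: "finite B1" using mb_finite[OF mb Suc(3)] .
  have fin2: "finite B2" using mb_finite[OF mb Suc(4)] .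
  obtain x where x: "x \<in> B1 - B2" using Suc(2) by (metis card.empty ex_in_conv nat.distinct(1))
  obtain y where y: "y \<in> B2 - B1" and B1': "insert y (B1 - {x}) \<in> \<B>"
    using mb_exch[OF mb Suc(3,4) x] by blast
  have e1: "insert y (B1 - {x}) - B2 = (B1 - B2) - {x}" using y by auto
  have e2: "B2 - insert y (B1 - {x}) = (B2 - B1) - {y}" using x by auto
  have c1: "card (insert y (B1 - {x}) - B2) = n" using e1 Suc(2) x fin1
    by (simp add: card_Diff_singleton)
  have "card (B2 - insert y (B1 - {x})) = n" using Suc(1)[OF c1[symmetric] B1' Suc(4)] c1 by simp
  then have "card (B2 - B1) - 1 = n" using e2 y fin2 by (simp add: card_Diff_singleton)
  moreover have "card (B2 - B1) \<ge> 1" using y fin2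
    by (metis One_nat_def Suc_leI card_gt_0_iff empty_iff finite_Diff)
  ultimately show ?case using Suc(2) by simp
qed

lemma mb_card:
  assumes mb: "matroid_bases E \<B>" and "B1 \<in> \<B>" "B2 \<in> \<B>"
  shows "card B1 = card B2"
proof -
  have f1: "finite B1" "finite B2" using mb_finite[OF mb] assms by auto
  have "card B1 = card ((B1 - B2) \<union> (B1 \<inter> B2))" by (metis Un_Diff_Int)
  also have "\<dots> = card (B1 - B2) + card (B1 \<inter> B2)"
    by (rule card_Un_disjoint) (use f1 in auto)
  finally have c1: "card B1 = card (B1 - B2) + card (B1 \<inter> B2)" .
  have "card B2 = card ((B2 - B1) \<union> (B1 \<inter> B2))" by (metis Un_Diff_Int Int_commute)
  also have "\<dots> = card (B2 - B1) + card (B1 \<inter> B2)"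
    by (rule card_Un_disjoint) (use f1 in auto)
  finally have c2: "card B2 = card (B2 - B1) + card (B1 \<inter> B2)" .
  show ?thesis using c1 c2 mb_card_diff[OF mb assms(2,3)] by simp
qed

lemma span_remove_one:
  assumes "v2.independent S" "s \<in> S" "w \<in> v2.span (insert s T)" "w \<in> v2.span (S - {s})"
    "T \<subseteq> S - {s}"
  shows "w \<in> v2.span T"
proof (rule ccontr)
  assume "w \<notin> v2.span T"
  then have "s \<in> v2.span (insert w T)" using v2.in_span_insert assms(3) by blast
  moreover have "insert w T \<subseteq> v2.span (S - {s})" using assms(4,5) v2.span_superset by blast
  then have "v2.span (insert w T) \<subseteq> v2.span (S - {s})"
    by (simp add: v2.span_minimal v2.subspace_span)
  ultimately have "s \<in> v2.span (S - {s})" by blast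
  then show False using assms(1,2) v2.dependent_def by blast
qed

lemma span_remove_set:
  assumes "v2.independent S" "finite R"
  shows "R \<subseteq> S \<Longrightarrow> w \<in> v2.span S \<Longrightarrow> \<forall>s\<in>R. w \<in> v2.span (S - {s}) \<Longrightarrow> w \<in> v2.span (S - R)"
  using assms(2)
proof (induction R rule: finite_induct)
  case empty then show ?case by simp
next
  case (insert s R)
  have "w \<in> v2.span (S - R)" using insert by auto
  moreover have "S - R = insert s (S - insert s R)" using insert by auto
  ultimately show ?case
    using span_remove_one[OF assms(1), of s w "S - insert s R"] insert by auto
qed

lemma gf2_coef1:
  assumes "s \<in> S" "w \<in> v2.span S" "w \<notin> v2.span (S - {s})"
  shows "w - s \<in> v2.span (S - {s})"
proof -
  obtain k where k: "w - scale2 k s \<in> v2.span (S - {s})" using v2.span_breakdown assms(1,2) by blast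
  show ?thesis
  proof (cases k)
    case zero then show ?thesis using k assms(3) by simp
  next
    case one then show ?thesis using k by simp
  qed
qed


context
  fixes E :: "'a set" and \<B> :: "'a set set" and f :: "'a \<Rightarrow> nat \<Rightarrow> bit"
  assumes mb: "matroid_bases E \<B>"
  and rep: "\<forall>X. X \<subseteq> E \<longrightarrow> (indep_of \<B> X \<longleftrightarrow> inj_on f X \<and> \<not> v2.dependent (f ` X))"
begin

lemma basis_indep: "B \<in> \<B> \<Longrightarrow> inj_on f B \<and> v2.independent (f ` B)"
  using rep mb_sub[OF mb] unfolding indep_of_def by blast

lemma V1:
  assumes B: "B \<in> \<B>" and x: "x \<in> E" "x \<notin> B"
  shows "f x \<in> v2.span (f ` B)"
proof -
  have ni: "\<not> indep_of \<B> (insert x B)"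
  proof
    assume "indep_of \<B> (insert x B)"
    then obtain B0 where "B0 \<in> \<B>" "insert x B \<subseteq> B0" unfolding indep_of_def by blast
    then have "B = B0" using mb_no_strict[OF mb B] by blast
    then show False using x \<open>insert x B \<subseteq> B0\<close> by blast
  qed
  have sub: "insert x B \<subseteq> E" using mb_sub[OF mb B] x by blast
  have n2: "\<not> (inj_on f (insert x B) \<and> v2.independent (f ` insert x B))"
    using rep sub ni by blast
  show ?thesis
  proof (cases "f x \<in> f ` B")
    case True then show ?thesis by (simp add: v2.span_base)
  next
    case False
    moreover have "B - {x} = B" using x by blast
    ultimately have "inj_on f (insert x B)" using basis_indep[OF B] by simp
    moreover have "f ` insert x B = insert (f x) (f ` B)" by simp
    ultimately have "\<not> v2.independent (insert (f x) (f ` B))" using n2 by metis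
    then show ?thesis using False basis_indep[OF B] v2.independent_insert[of "f x" "f ` B"] by simp
  qed
qed

lemma V2:
  assumes "insert x (B - {b}) \<in> \<B>" "x \<notin> B"
  shows "f x \<notin> v2.span (f ` (B - {b}))"
proof -
  have i: "inj_on f (insert x (B - {b}))" "v2.independent (insert (f x) (f ` (B - {b})))"
    using basis_indep[OF assms(1)] by auto
  have "f x \<notin> f ` (B - {b})" using i(1) assms(2) by auto
  then show ?thesis using i(2) v2.independent_insert[of "f x" "f ` (B - {b})"] by simp
qed

lemma V3:
  assumes B: "B \<in> \<B>" and x: "x \<in> E" "x \<notin> B" and b: "b \<in> B"
    and sp: "f x \<notin> v2.span (f ` (B - {b}))"
  shows "insert x (B - {b}) \<in> \<B>"
proof -
  have ind: "v2.independent (f ` (B - {b}))"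
    by (rule v2.independent_mono[OF conjunct2[OF basis_indep[OF B]]]) (rule image_mono, blast)
  have nf: "f x \<notin> f ` (B - {b})"
  proof
    assume "f x \<in> f ` (B - {b})"
    then have "f x \<in> v2.span (f ` (B - {b}))" by (rule v2.span_base)
    with sp show False by simp
  qed
  have inj0: "inj_on f (B - {b})" using basis_indep[OF B] inj_on_subset[of f B "B - {b}"] by blast
  have dx: "(B - {b}) - {x} = B - {b}" using x by blast
  have inj: "inj_on f (insert x (B - {b}))" using nf inj0 dx by (simp only: inj_on_insert) simp
  have ind2: "v2.independent (f ` insert x (B - {b}))" using v2.independent_insertI[OF sp ind] by simp
  have sub: "insert x (B - {b}) \<subseteq> E" using mb_sub[OF mb B] x by blast
  have "indep_of \<B> (insert x (B - {b})) \<longleftrightarrow> inj_on f (insert x (B - {b})) \<and> \<not> v2.dependent (f ` insert x (B - {b}))"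
    using rep[rule_format, OF sub] by simp
  then have "indep_of \<B> (insert x (B - {b}))" using inj ind2 by simp
  then obtain B0 where B0: "B0 \<in> \<B>" "insert x (B - {b}) \<subseteq> B0" unfolding indep_of_def by blast
  have fB: "finite B" using mb_finite[OF mb B] .
  have cpos: "card B > 0" using fB b card_gt_0_iff by blast
  have "card (insert x (B - {b})) = Suc (card (B - {b}))" using fB x by simp
  also have "\<dots> = card B" using cpos fB b by (simp add: card_Diff_singleton)
  also have "\<dots> = card B0" using mb_card[OF mb B B0(1)] .
  finally have "insert x (B - {b}) = B0"
    using card_subset_eq[OF mb_finite[OF mb B0(1)] B0(2)] by simp
  then show ?thesis using B0 by simp
qed

lemma img_diff: "B \<in> \<B> \<Longrightarrow> b \<in> B \<Longrightarrow> f ` (B - {b}) = f ` B - {f b}"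
proof -
  assume "B \<in> \<B>" "b \<in> B"
  then have "inj_on f B" using basis_indep by blast
  then show ?thesis using inj_on_image_set_diff[of f B B "{b}"] \<open>b \<in> B\<close> by simp
qed

lemma img_sub:
  assumes B: "B \<in> \<B>" and X: "X \<in> \<B>"
  shows "f ` B - f ` (B - X) \<subseteq> f ` (B \<inter> X)"
proof
  fix v assume v: "v \<in> f ` B - f ` (B - X)"
  then obtain c where c: "c \<in> B" "v = f c" by blast
  have "c \<in> X" using v c by blast
  then show "v \<in> f ` (B \<inter> X)" using c by blast
qed

lemma img_sub2:
  assumes X: "X \<in> \<B>" and x: "x \<in> X" "x \<notin> B"
  shows "f ` (B \<inter> X) \<subseteq> f ` X - {f x}"
proof
  fix v assume "v \<in> f ` (B \<inter> X)"
  then obtain c where c: "c \<in> B" "c \<in> X" "v = f c" by blast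
  have "c \<noteq> x" using c x by blast
  then have "f c \<noteq> f x" using conjunct1[OF basis_indep[OF X]] c(2) x(1) unfolding inj_on_def by blast
  moreover have "f c \<in> f ` X" using c(2) by (rule imageI)
  ultimately show "v \<in> f ` X - {f x}" using c(3) by simp
qed

lemma remove_all:
  assumes B: "B \<in> \<B>" and w: "w \<in> v2.span (f ` B)"
    and allb: "\<forall>s\<in>f ` (B - X). w \<in> v2.span (f ` B - {s})"
  shows "w \<in> v2.span (f ` B - f ` (B - X))"
proof -
  have fin: "finite (f ` (B - X))" using mb_finite[OF mb B] by simp
  have sub: "f ` (B - X) \<subseteq> f ` B" by (rule image_mono) blast
  show ?thesis by (rule span_remove_set[OF conjunct2[OF basis_indep[OF B]] fin sub w allb])
qed

lemma indep_contra:
  assumes X: "X \<in> \<B>" and x: "x \<in> X" and sp: "f x \<in> v2.span (f ` X - {f x})"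
  shows False
proof -
  have "f x \<in> f ` X" using x by (rule imageI)
  then have "\<exists>a\<in>f ` X. a \<in> v2.span (f ` X - {a})" by (rule bexI[where x="f x" and P="\<lambda>a. a \<in> v2.span (f ` X - {a})", OF sp])
  then have "v2.dependent (f ` X)" unfolding v2.dependent_def .
  then show False using basis_indep[OF X] by simp
qed

lemma nonbasis_exists:
  assumes B: "B \<in> \<B>" and X: "X \<in> \<B>" and x12: "x1 \<in> X - B" "x2 \<in> X - B" "x1 \<noteq> x2"
  shows "\<exists>x\<in>X - B. \<exists>b\<in>B - X. f x \<in> v2.span (f ` (B - {b}))"
proof (rule ccontr)
  assume H: "\<not> ?thesis"
  have XE: "X \<subseteq> E" using mb_sub[OF mb X] .
  have x1E: "x1 \<in> E" "x1 \<notin> B" using x12 XE by auto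
  have x2E: "x2 \<in> E" "x2 \<notin> B" using x12 XE by auto
  have w1: "f x1 \<in> v2.span (f ` B)" using V1[OF B x1E] .
  have w2: "f x2 \<in> v2.span (f ` B)" using V1[OF B x2E] .
  have allb: "\<forall>s\<in>f ` (B - X). f x1 + f x2 \<in> v2.span (f ` B - {s})"
  proof
    fix s assume "s \<in> f ` (B - X)"
    then obtain b where b: "b \<in> B - X" "s = f b" by blast
    have bB: "b \<in> B" using b by simp
    have fbS: "f b \<in> f ` B" using bB by (rule imageI)
    have h1: "f x1 \<notin> v2.span (f ` (B - {b}))" using H x12(1) b(1) by blast
    have h2: "f x2 \<notin> v2.span (f ` (B - {b}))" using H x12(2) b(1) by blast
    have n1: "f x1 \<notin> v2.span (f ` B - {f b})" using h1 img_diff[OF B bB] by simp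
    have n2: "f x2 \<notin> v2.span (f ` B - {f b})" using h2 img_diff[OF B bB] by simp
    have "(f x1 - f b) + (f x2 - f b) \<in> v2.span (f ` B - {f b})"
      by (rule v2.span_add) (rule gf2_coef1[OF fbS w1 n1], rule gf2_coef1[OF fbS w2 n2])
    then show "f x1 + f x2 \<in> v2.span (f ` B - {s})" using b(2) bit_vec_sum by simp
  qed
  have w12: "f x1 + f x2 \<in> v2.span (f ` B)" using w1 w2 by (rule v2.span_add)
  have "f x1 + f x2 \<in> v2.span (f ` B - f ` (B - X))" by (rule remove_all[OF B w12 allb])
  moreover have "f ` B - f ` (B - X) \<subseteq> f ` X - {f x1}"
    using img_sub[OF B X] img_sub2[OF X, of x1 B] x12(1) by blast
  ultimately have s1: "f x1 + f x2 \<in> v2.span (f ` X - {f x1})"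
    using v2.span_mono by blast
  have "f x2 \<in> f ` X - {f x1}"
  proof -
    have "f x2 \<noteq> f x1" using conjunct1[OF basis_indep[OF X]] x12 unfolding inj_on_def by blast
    then show ?thesis using x12(2) by blast
  qed
  then have s2: "f x2 \<in> v2.span (f ` X - {f x1})" by (rule v2.span_base)
  have "(f x1 + f x2) - f x2 \<in> v2.span (f ` X - {f x1})" using s1 s2 by (rule v2.span_diff)
  then have "f x1 \<in> v2.span (f ` X - {f x1})" by simp
  then show False using indep_contra[OF X] x12(1) by blast
qed

lemma dual_exchange:
  assumes B: "B \<in> \<B>" and X: "X \<in> \<B>" and x: "x \<in> X - B"
  shows "\<exists>b\<in>B - X. insert x (B - {b}) \<in> \<B>"
proof (rule ccontr)
  assume H: "\<not> ?thesis"
  have XE: "X \<subseteq> E" using mb_sub[OF mb X] .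
  have xE: "x \<in> E" "x \<notin> B" using x XE by auto
  have w: "f x \<in> v2.span (f ` B)" using V1[OF B xE] .
  have allb: "\<forall>s\<in>f ` (B - X). f x \<in> v2.span (f ` B - {s})"
  proof
    fix s assume "s \<in> f ` (B - X)"
    then obtain b where b: "b \<in> B - X" "s = f b" by blast
    have bB: "b \<in> B" using b by simp
    have nb: "insert x (B - {b}) \<notin> \<B>" using H b(1) by blast
    have "f x \<in> v2.span (f ` (B - {b}))"
    proof (rule ccontr)
      assume "f x \<notin> v2.span (f ` (B - {b}))"
      then have "insert x (B - {b}) \<in> \<B>" by (rule V3[OF B xE bB])
      with nb show False by simp
    qed
    then show "f x \<in> v2.span (f ` B - {s})" using img_diff[OF B bB] b(2) by simp
  qed
  have "f x \<in> v2.span (f ` B - f ` (B - X))" by (rule remove_all[OF B w allb])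
  moreover have "f ` B - f ` (B - X) \<subseteq> f ` X - {f x}"
    using img_sub[OF B X] img_sub2[OF X, of x B] x by blast
  ultimately have "f x \<in> v2.span (f ` X - {f x})" using v2.span_mono by blast
  then show False using indep_contra[OF X] x by blast
qed

lemma main_ind:
  assumes mb1: "matroid_bases E \<B>1" and sub: "\<B>1 \<subseteq> \<B>" and X1: "X \<in> \<B>1"
    and adj: "\<forall>Y. base_adj \<B> X Y \<longrightarrow> Y \<in> \<B>1"
  shows "B \<in> \<B> \<Longrightarrow> B \<in> \<B>1"
proof (induction "card (B - X)" arbitrary: B rule: less_induct)
  case (less B)
  have X: "X \<in> \<B>" using sub X1 by blast
  have fB: "finite B" using mb_finite[OF mb less(2)] .
  have fX: "finite X" using mb_finite[OF mb X] .
  have cd: "card (X - B) = card (B - X)" using mb_card_diff[OF mb X less(2)] .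
  consider "card (B - X) = 0" | "card (B - X) = 1" | "card (B - X) \<ge> 2" by linarith
  then show ?case
  proof cases
    case 1
    then have "B \<subseteq> X" using fB by auto
    then have "B = X" using mb_no_strict[OF mb less(2) X] by blast
    then show ?thesis using X1 by simp
  next
    case 2
    have "card ((X - B) \<union> (B - X)) = card (X - B) + card (B - X)"
      by (rule card_Un_disjoint) (use fB fX in auto)
    then have "card ((X - B) \<union> (B - X)) = 2" using 2 cd by simp
    then have "base_adj \<B> X B" unfolding base_adj_def using X less(2) by simp
    then show ?thesis using adj by blast
  next
    case 3
    then have "card (X - B) \<ge> 2" using cd by simp
    then have c2X: "card (X - B) \<ge> 2" .
    then have "X - B \<noteq> {}" by (intro notI) simp
    then obtain x1 where x1: "x1 \<in> X - B" by blast
    have "card ((X - B) - {x1}) \<ge> 1" using c2X x1 by (simp add: card_Diff_singleton)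
    then have "(X - B) - {x1} \<noteq> {}" by (intro notI) simp
    then obtain x2 where x2: "x2 \<in> (X - B) - {x1}" by blast
    have x12: "x1 \<in> X - B" "x2 \<in> X - B" "x1 \<noteq> x2" using x1 x2 by auto
    obtain x b' where xb': "x \<in> X - B" "b' \<in> B - X" "f x \<in> v2.span (f ` (B - {b'}))"
      using nonbasis_exists[OF less(2) X x12] by blast
    have nb: "insert x (B - {b'}) \<notin> \<B>" using V2 xb' by blast
    obtain b where b: "b \<in> B - X" "insert x (B - {b}) \<in> \<B>"
      using dual_exchange[OF less(2) X xb'(1)] by blast
    obtain x' where x': "x' \<in> X - B" "insert x' (B - {b'}) \<in> \<B>"
      using mb_exch[OF mb less(2) X xb'(2)] by blast
    have "b \<noteq> b'" using nb b by blast
    have "x' \<noteq> x" using nb x' by blast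
    have e1: "insert x (B - {b}) - X = (B - X) - {b}" using xb' by blast
    have e2: "insert x' (B - {b'}) - X = (B - X) - {b'}" using x' by blast
    have c1: "card (insert x (B - {b}) - X) < card (B - X)"
      unfolding e1 using b fB by (intro card_Diff1_less) auto
    have c2: "card (insert x' (B - {b'}) - X) < card (B - X)"
      unfolding e2 using xb' fB by (intro card_Diff1_less) auto
    have B1: "insert x (B - {b}) \<in> \<B>1" using less(1)[OF c1 b(2)] .
    have B2: "insert x' (B - {b'}) \<in> \<B>1" using less(1)[OF c2 x'(2)] .
    have "x' \<in> insert x' (B - {b'}) - insert x (B - {b})" using x' \<open>x' \<noteq> x\<close> by blast
    then obtain y where y: "y \<in> insert x (B - {b}) - insert x' (B - {b'})"
      "insert y (insert x' (B - {b'}) - {x'}) \<in> \<B>1"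
      using mb_exch[OF mb1 B2 B1] by blast
    have e3: "insert x' (B - {b'}) - {x'} = B - {b'}" using x' by blast
    have "y = x \<or> y = b'" using y(1) by blast
    moreover have "y \<noteq> x"
    proof
      assume "y = x"
      then have "insert x (B - {b'}) \<in> \<B>1" using y(2) e3 by simp
      then show False using nb sub by blast
    qed
    ultimately have "y = b'" by blast
    moreover have "insert b' (B - {b'}) = B" using xb' by blast
    ultimately show ?thesis using y(2) e3 by simp
  qed
qed

end


theorem lemma3:
  fixes E :: "'a set" and \<B> \<B>1 :: "'a set set" and X :: "'a set"
  assumes "binary_matroid E \<B>"
    and "matroid_bases E \<B>1"
    and "\<B>1 \<subseteq> \<B>"
    and "X \<in> \<B>1"
    and "\<forall>Y. base_adj \<B> X Y \<longrightarrow> Y \<in> \<B>1"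
  shows "\<B>1 = \<B>"
proof -
  have mb: "matroid_bases E \<B>" using assms(1) unfolding binary_matroid_def by blast
  obtain f :: "'a \<Rightarrow> nat \<Rightarrow> bit" where
    rep: "\<forall>X. X \<subseteq> E \<longrightarrow> (indep_of \<B> X \<longleftrightarrow> inj_on f X \<and> \<not> v2.dependent (f ` X))"
    using assms(1) unfolding binary_matroid_def by blast
  show ?thesis using main_ind[OF mb rep assms(2-5)] assms(3) by blast
qed

end
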